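(* Let $U_5=(\mathbb{N},F_5)$ where $F_5=\{f_i:i\in\mathbb{N}\setminus\{0\}\}$ and, for $i\ge1$, $j\in\mathbb{N}$, $f_i(j)=1$ if $i=j$ and $f_i(j)=0$ if $i\ne j$. Then $\operatorname{typ}_u(Tab(U_5),h)=t_5$, where $h$ is the depth and $t_5$ is the table with rows (indexed $i,d,a$; entries in columns $i,d,a$) $(\gamma,\epsilon,\epsilon)$, $(\gamma,\gamma,\gamma)$, $(\gamma,\gamma,\gamma)$.
   Context: Let $\mathbb{N}=\{0,1,2,\dots\}$; for $k\ge 2$, $E_k=\{0,\dots,k-1\}$; $\mathcal{P}(\mathbb{N})$ is the set of nonempty finite subsets of $\mathbb{N}$. For a nonempty set $F$, a decision table $T\in\mathcal{M}_k(F)$ is a rectangular table with $n\ge1$ columns labeled with attributes $f_1,\dots,f_n\in F$ (columns with the same label are equal), whose rows are pairwise different tuples in $E_k^n$ (possibly none), each row labeled with a set from $\mathcal{P}(\mathbb{N})$; $At(T)=\{f_1,\dots,f_n\}$, $\Delta(T)$ the set of rows; for a word $\alpha=(f_{i_1},\delta_1)\cdots(f_{i_m},\delta_m)$, $T\alpha$ is the subtable of rows with value $\delta_j$ in column $f_{i_j}$ for all $j$. Information system: $U=(A,F)$ with $A$ nonempty and $F$ a nonempty set of functions $A\to E_k$ (here $k=2$). A problem over $U$ is $z=(\nu,f_1,\dots,f_n)$ with $n\ge1$, $\nu:E_k^n\to\mathcal{P}(\mathbb{N})$, $f_1,\dots,f_n\in F$. Its table $T(z)\in\mathcal{M}_k(F)$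 has columns labeled $f_1,\dots,f_n$; $\bar\delta\in E_k^n$ is a row iff there is $x\in A$ with $f_j(x)=\delta_j$ for all $j$, and it is labeled $\nu(\bar\delta)$. $Tab(U)=\{T(z): z \text{ a problem over } U\}$ (a closed class, i.e. closed under removal of columns (keeping the first of equal rows), arbitrary changing of decision sets, permutation and duplication of columns). Decision trees over $\mathcal{M}_k(F)$: finite rooted directed trees with at least two nodes; root and edges leaving the root unlabeled; worker nodes (neither root nor terminal) labeled by attributes in $F$; edges leaving worker nodes labeled by elements of $E_k$; terminal nodes labeled by numbers in $\mathbb{N}$. For a complete path $\xi$, $\pi(\xi)$ is the word of pairs (attribute of worker node, label of leaving edge) along $\xi$, $\varphi(\xi)$ the word of those attributes, $\tau(\xi)$ the terminal label. A nondeterministic decision tree for $T$ uses only attributes in $At(T)$, satisfies $\bigcup_\xi\Delta(T\pi(\xi))=\Delta(T)$, and for every row $r\in\Delta(T\pi(\xi))$, $\tau(\xi)$ lies in the decision set of $r$. It is deterministic if exactly one edge leaves the root and edges leaving each worker node have distinct labels. The depth of a word is its length $h(\alpha)=|\alpha|$; $h(\Gamma)=\max_\xi h(\varphi(\xi))$. For $T$ with columns $f_1,\dots,f_n$: $h^i(T)=n$, $h^d(T)$ and $h^a(T)$ are the minimum depths of deterministic, respectively nondeterministic, decision trees for $T$. For $b,c\in\{i,d,a\}$ and a class $\mathcal{C}$, $\mathcal{U}^{bc}_{\mathcal{C}h}(n)=\max\{h^b(T):T\in\mathcal{C},h^c(T)\le n\}$ (defined iff this set is nonempty and finite). For a partial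 $g:\mathbb{N}\to\mathbb{N}$, $\mathrm{Dom}^+(g)=\{n\in\mathrm{Dom}(g):g(n)\ge n\}$, $\mathrm{Dom}^-(g)=\{n\in\mathrm{Dom}(g):g(n)\le n\}$; $\operatorname{typ}(g)$ is $\alpha$ if $\mathrm{Dom}(g)$ is infinite and $g$ bounded above; $\beta$ if $\mathrm{Dom}(g)$ infinite, $\mathrm{Dom}^+(g)$ finite, $g$ unbounded; $\gamma$ if $\mathrm{Dom}^+(g)$ and $\mathrm{Dom}^-(g)$ are infinite; $\delta$ if $\mathrm{Dom}(g)$ infinite and $\mathrm{Dom}^-(g)$ finite; $\epsilon$ if $\mathrm{Dom}(g)$ finite. $\operatorname{typ}_u(\mathcal{C},h)$ is the $3\times3$ table (rows and columns indexed $i,d,a$) with entry $\operatorname{typ}(\mathcal{U}^{bc}_{\mathcal{C}h})$ in row $b$, column $c$. *)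

theory Defs
  imports Main
begin

(* A tree is given by the (nonempty) list of
   subtrees hanging below the unlabeled root.  A subtree is either a terminal
   node (labelled by a natural number) or a worker node labelled by an
   attribute with a nonempty list of leaving edges, each labelled by a value. *)
datatype 'f dtree = Term nat | Work 'f "(nat \<times> 'f dtree) list"

fun tpaths :: "'f dtree \<Rightarrow> (('f \<times> nat) list \<times> nat) set" where
  "tpaths (Term m) = {([], m)}"
| "tpaths (Work f cs) =
     (\<Union>dc \<in> set cs. (\<lambda>(p, m). ((f, fst dc) # p, m)) ` tpaths (snd dc))"

fun wf_node :: "nat \<Rightarrow> 'f set \<Rightarrow> 'f dtree \<Rightarrow> bool" where
  "wf_node k Fs (Term m) = True"
| "wf_node k Fs (Work f cs) =
     (cs \<noteq> [] \<and> f \<in> Fs \<and> (\<forall>dc \<in> set cs. fst dc < k \<and> wf_node k Fs (snd dc)))"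

fun det_node :: "'f dtree \<Rightarrow> bool" where
  "det_node (Term m) = True"
| "det_node (Work f cs) = (distinct (map fst cs) \<and> (\<forall>dc \<in> set cs. det_node (snd dc)))"

definition paths :: "'f dtree list \<Rightarrow> (('f \<times> nat) list \<times> nat) set" where
  "paths G = (\<Union>c \<in> set G. tpaths c)"

definition depth :: "'f dtree list \<Rightarrow> nat" where
  "depth G = Max ((\<lambda>pm. length (fst pm)) ` paths G)"

(* A problem z = (nu, f_1..f_n) is a pair
   (nu, fs) with fs the list of attributes. *)
definition rows :: "'a set \<Rightarrow> ('a \<Rightarrow> nat) list \<Rightarrow> nat list set" where
  "rows A fs = (\<lambda>x. map (\<lambda>f. f x) fs) ` A"

definition row_sat :: "('a \<Rightarrow> nat) list \<Rightarrow> nat list \<Rightarrow> (('a \<Rightarrow> nat) \<times> nat) list \<Rightarrow> bool" where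
  "row_sat fs r p = (\<forall>fd \<in> set p. \<forall>j < length fs. fs ! j = fst fd \<longrightarrow> r ! j = snd fd)"

definition subrows :: "'a set \<Rightarrow> ('a \<Rightarrow> nat) list \<Rightarrow> (('a \<Rightarrow> nat) \<times> nat) list \<Rightarrow> nat list set" where
  "subrows A fs p = {r \<in> rows A fs. row_sat fs r p}"

type_synonym 'a problem = "(nat list \<Rightarrow> nat set) \<times> ('a \<Rightarrow> nat) list"

definition is_problem :: "'a set \<Rightarrow> ('a \<Rightarrow> nat) set \<Rightarrow> nat \<Rightarrow> 'a problem \<Rightarrow> bool" where
  "is_problem A F k z =
     (snd z \<noteq> [] \<and> set (snd z) \<subseteq> F \<and>
      (\<forall>d. length d = length (snd z) \<and> set d \<subseteq> {..<k} \<longrightarrow> fst z d \<noteq> {} \<and> finite (fst z d)))"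

definition ndt :: "'a set \<Rightarrow> nat \<Rightarrow> 'a problem \<Rightarrow> ('a \<Rightarrow> nat) dtree list \<Rightarrow> bool" where
  "ndt A k z G =
     (G \<noteq> [] \<and> (\<forall>c \<in> set G. wf_node k (set (snd z)) c) \<and>
      (\<Union>pm \<in> paths G. subrows A (snd z) (fst pm)) = rows A (snd z) \<and>
      (\<forall>pm \<in> paths G. \<forall>r \<in> subrows A (snd z) (fst pm). snd pm \<in> fst z r))"

definition dt :: "'a set \<Rightarrow> nat \<Rightarrow> 'a problem \<Rightarrow> ('a \<Rightarrow> nat) dtree list \<Rightarrow> bool" where
  "dt A k z G = (ndt A k z G \<and> length G = 1 \<and> (\<forall>c \<in> set G. det_node c))"

datatype cmeasure = CI | CD | CA

definition hcomp :: "'a set \<Rightarrow> nat \<Rightarrow> cmeasure \<Rightarrow> 'a problem \<Rightarrow> nat" where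
  "hcomp A k b z = (case b of
      CI \<Rightarrow> length (snd z)
    | CD \<Rightarrow> (LEAST h. \<exists>G. dt A k z G \<and> depth G = h)
    | CA \<Rightarrow> (LEAST h. \<exists>G. ndt A k z G \<and> depth G = h))"

definition Ufun :: "'a set \<Rightarrow> ('a \<Rightarrow> nat) set \<Rightarrow> nat \<Rightarrow> cmeasure \<Rightarrow> cmeasure \<Rightarrow> nat \<Rightarrow> nat option" where
  "Ufun A F k b c n =
     (let S = {hcomp A k b z | z. is_problem A F k z \<and> hcomp A k c z \<le> n}
      in if S \<noteq> {} \<and> finite S then Some (Max S) else None)"

definition Dom :: "(nat \<Rightarrow> nat option) \<Rightarrow> nat set" where
  "Dom g = {n. g n \<noteq> None}"
definition DomP :: "(nat \<Rightarrow> nat option) \<Rightarrow> nat set" where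
  "DomP g = {n \<in> Dom g. the (g n) \<ge> n}"
definition DomM :: "(nat \<Rightarrow> nat option) \<Rightarrow> nat set" where
  "DomM g = {n \<in> Dom g. the (g n) \<le> n}"
definition bounded_above :: "(nat \<Rightarrow> nat option) \<Rightarrow> bool" where
  "bounded_above g = (\<exists>B. \<forall>n \<in> Dom g. the (g n) \<le> B)"

datatype ftype = TAlpha | TBeta | TGamma | TDelta | TEps

definition is_typ :: "(nat \<Rightarrow> nat option) \<Rightarrow> ftype \<Rightarrow> bool" where
  "is_typ g t = (case t of
      TAlpha \<Rightarrow> infinite (Dom g) \<and> bounded_above g
    | TBeta \<Rightarrow> infinite (Dom g) \<and> finite (DomP g) \<and> \<not> bounded_above g
    | TGamma \<Rightarrow> infinite (DomP g) \<and> infinite (DomM g)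
    | TDelta \<Rightarrow> infinite (Dom g) \<and> finite (DomM g)
    | TEps \<Rightarrow> finite (Dom g))"

definition typ_of :: "(nat \<Rightarrow> nat option) \<Rightarrow> ftype" where
  "typ_of g = (THE t. is_typ g t)"

definition typ_u :: "'a set \<Rightarrow> ('a \<Rightarrow> nat) set \<Rightarrow> nat \<Rightarrow> cmeasure \<Rightarrow> cmeasure \<Rightarrow> ftype" where
  "typ_u A F k b c = typ_of (Ufun A F k b c)"

definition f5 :: "nat \<Rightarrow> nat \<Rightarrow> nat" where
  "f5 i j = (if i = j then 1 else 0)"

definition F5 :: "(nat \<Rightarrow> nat) set" where
  "F5 = {f5 i | i. i \<noteq> 0}"

definition t5 :: "cmeasure \<Rightarrow> cmeasure \<Rightarrow> ftype" where
  "t5 b c = (case b of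
      CI \<Rightarrow> (case c of CI \<Rightarrow> TGamma | CD \<Rightarrow> TEps | CA \<Rightarrow> TEps)
    | CD \<Rightarrow> TGamma
    | CA \<Rightarrow> TGamma)"

end

theory Submission
  imports Defs
begin

lemma F5_01: "f \<in> F5 \<Longrightarrow> f x = 0 \<or> f x = 1" by (auto simp: F5_def f5_def)
lemma F5_zero: "f \<in> F5 \<Longrightarrow> f 0 = 0" by (auto simp: F5_def f5_def)

lemma finite_tpaths: "finite (tpaths T)" by (induction T rule: tpaths.induct) auto
lemma finite_paths: "finite (paths G)" by (simp add: paths_def finite_tpaths)

lemma depth_ge: "pm \<in> paths G \<Longrightarrow> length (fst pm) \<le> depth G"
  unfolding depth_def by (rule Max_ge) (auto simp: finite_paths)

lemma row_sat_row: "row_sat fs (map (\<lambda>f. f x) fs) p \<longleftrightarrow> (\<forall>(f,d) \<in> set p. f \<in> set fs \<longrightarrow> f x = d)"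
  unfolding row_sat_def by (force simp: in_set_conv_nth)

lemma subrows_iff: "r \<in> subrows UNIV fs p \<longleftrightarrow> (\<exists>x. r = map (\<lambda>f. f x) fs \<and> row_sat fs r p)"
  by (auto simp: subrows_def rows_def)

fun chain :: "('f \<Rightarrow> nat) \<Rightarrow> 'f list \<Rightarrow> nat \<Rightarrow> 'f dtree" where
  "chain lab [] t = Term t"
| "chain lab (q#qs) t = Work q [(0, chain lab qs t), (1, Term (lab q))]"

lemma tpaths_chain_Cons: "(p,m) \<in> tpaths (chain lab (a#Q) t) \<longleftrightarrow>
   (\<exists>p'. p = (a,0)#p' \<and> (p',m) \<in> tpaths (chain lab Q t)) \<or> (p = [(a,1)] \<and> m = lab a)"
  by auto

lemma tpaths_chain: "(p,m) \<in> tpaths (chain lab Q t) \<longleftrightarrow> (p = map (\<lambda>q. (q,0)) Q \<and> m = t) \<or>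
   (\<exists>as q bs. Q = as @ q # bs \<and> p = map (\<lambda>q. (q,0)) as @ [(q,1)] \<and> m = lab q)"
proof (induction Q arbitrary: p)
  case Nil
  then show ?case by simp
next
  case (Cons a Q)
  show ?case
  proof
    assume "(p,m) \<in> tpaths (chain lab (a#Q) t)"
    then consider p' where "p = (a,0)#p'" "(p',m) \<in> tpaths (chain lab Q t)" | "p = [(a,1)]" "m = lab a"
      unfolding tpaths_chain_Cons by blast
    then show "(p = map (\<lambda>q. (q,0)) (a#Q) \<and> m = t) \<or>
   (\<exists>as q bs. a#Q = as @ q # bs \<and> p = map (\<lambda>q. (q,0)) as @ [(q,1)] \<and> m = lab q)"
    proof cases
      case 1
      then show ?thesis using Cons.IH[of p'] 
        by (metis (no_types, lifting) Cons_eq_appendI list.simps(9))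
    next
      case 2
      then show ?thesis by (metis append_Nil list.simps(8))
    qed
  next
    assume "(p = map (\<lambda>q. (q,0)) (a#Q) \<and> m = t) \<or>
   (\<exists>as q bs. a#Q = as @ q # bs \<and> p = map (\<lambda>q. (q,0)) as @ [(q,1)] \<and> m = lab q)"
    then show "(p,m) \<in> tpaths (chain lab (a#Q) t)"
    proof
      assume "p = map (\<lambda>q. (q,0)) (a#Q) \<and> m = t"
      then show ?thesis using Cons.IH by auto
    next
      assume "\<exists>as q bs. a#Q = as @ q # bs \<and> p = map (\<lambda>q. (q,0)) as @ [(q,1)] \<and> m = lab q"
      then obtain as q bs where h: "a#Q = as @ q # bs" "p = map (\<lambda>q. (q,0)) as @ [(q,1)]" "m = lab q" by blast
      show ?thesis
      proof (cases as)
        case Nil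
        then show ?thesis using h by auto
      next
        case (Cons a' as')
        then have "Q = as' @ q # bs" "a' = a" using h by auto
        then show ?thesis using h Cons Cons.IH[of "map (\<lambda>q. (q,0)) as' @ [(q,1)]"] 
          unfolding tpaths_chain_Cons by auto
      qed
    qed
  qed
qed


lemma paths_single: "paths [c] = tpaths c" by (simp add: paths_def)

lemma chain_depth: "depth [chain lab Q t] \<le> length Q"
  unfolding depth_def paths_single
proof (rule Max.boundedI)
  show "finite ((\<lambda>pm. length (fst pm)) ` tpaths (chain lab Q t))" by (simp add: finite_tpaths)
  have "(map (\<lambda>q. (q,0)) Q, t) \<in> tpaths (chain lab Q t)" by (simp add: tpaths_chain)
  then show "(\<lambda>pm. length (fst pm)) ` tpaths (chain lab Q t) \<noteq> {}" by blast
  fix a assume "a \<in> (\<lambda>pm. length (fst pm)) ` tpaths (chain lab Q t)"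
  then obtain p m where "(p,m) \<in> tpaths (chain lab Q t)" "a = length p" by auto
  then show "a \<le> length Q" unfolding tpaths_chain by auto
qed

lemma chain_wf: "set Q \<subseteq> Fs \<Longrightarrow> wf_node 2 Fs (chain lab Q t)"
  by (induction Q) auto

lemma chain_det: "det_node (chain lab Q t)"
  by (induction Q) auto

lemma chain_dt:
  assumes F: "set fs \<subseteq> F5" and Q: "set Q \<subseteq> set fs"
    and lab: "\<And>q x. q \<in> set Q \<Longrightarrow> q x = 1 \<Longrightarrow> lab q \<in> nu (map (\<lambda>f. f x) fs)"
    and t: "\<And>x. (\<forall>q\<in>set Q. q x = 0) \<Longrightarrow> t \<in> nu (map (\<lambda>f. f x) fs)"
  shows "dt UNIV 2 (nu, fs) [chain lab Q t]"
proof -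
  have QF: "\<And>q x. q \<in> set Q \<Longrightarrow> q x = 0 \<or> q x = 1" using F Q F5_01 by blast
  have cov: "(\<Union>pm \<in> paths [chain lab Q t]. subrows UNIV fs (fst pm)) = rows UNIV fs"
  proof
    show "(\<Union>pm \<in> paths [chain lab Q t]. subrows UNIV fs (fst pm)) \<subseteq> rows UNIV fs"
      by (auto simp: subrows_def)
  next
    show "rows UNIV fs \<subseteq> (\<Union>pm \<in> paths [chain lab Q t]. subrows UNIV fs (fst pm))"
    proof
      fix r assume "r \<in> rows UNIV fs"
      then obtain x where r: "r = map (\<lambda>f. f x) fs" by (auto simp: rows_def)
      show "r \<in> (\<Union>pm \<in> paths [chain lab Q t]. subrows UNIV fs (fst pm))"
      proof (cases "\<exists>q\<in>set Q. q x = 1")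
        case True
        then obtain as q bs where h: "Q = as @ q # bs" "q x = 1" "\<forall>a\<in>set as. \<not> a x = 1"
          using split_list_first_prop[of Q "\<lambda>q. q x = 1"] by blast
        have as0: "\<forall>a\<in>set as. a x = 0"
        proof
          fix a assume "a \<in> set as"
          then have "a \<in> set Q" "\<not> a x = 1" using h by auto
          then show "a x = 0" using QF by blast
        qed
        let ?p = "map (\<lambda>q. (q,0)) as @ [(q,1)]"
        have "(?p, lab q) \<in> paths [chain lab Q t]"
          unfolding paths_single tpaths_chain using h by blast
        moreover have "r \<in> subrows UNIV fs ?p"
          unfolding subrows_iff r row_sat_row using as0 h by auto
        ultimately show ?thesis by force
      next
        case False
        then have all0: "\<forall>a\<in>set Q. a x = 0" using QF by blast
        let ?p = "map (\<lambda>q. (q,0)) Q"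
        have "(?p, t) \<in> paths [chain lab Q t]"
          unfolding paths_single tpaths_chain by blast
        moreover have "r \<in> subrows UNIV fs ?p"
          unfolding subrows_iff r row_sat_row using all0 by auto
        ultimately show ?thesis by force
      qed
    qed
  qed
  have labs: "\<forall>pm \<in> paths [chain lab Q t]. \<forall>r \<in> subrows UNIV fs (fst pm). snd pm \<in> nu r"
  proof (intro ballI)
    fix pm r assume pm: "pm \<in> paths [chain lab Q t]" and r: "r \<in> subrows UNIV fs (fst pm)"
    obtain p m where pmd: "pm = (p,m)" by fastforce
    from r obtain x where rx: "r = map (\<lambda>f. f x) fs" and rs: "row_sat fs r p"
      unfolding subrows_iff pmd by auto
    have sat: "\<forall>(f,d) \<in> set p. f \<in> set fs \<longrightarrow> f x = d" using rs unfolding rx row_sat_row .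
    from pm consider "p = map (\<lambda>q. (q,0)) Q" "m = t"
      | as q bs where "Q = as @ q # bs" "p = map (\<lambda>q. (q,0)) as @ [(q,1)]" "m = lab q"
      unfolding pmd paths_single tpaths_chain by blast
    then show "snd pm \<in> nu r"
    proof cases
      case 1
      have "\<forall>q\<in>set Q. q x = 0" using sat Q unfolding 1 by auto
      then show ?thesis using t 1 pmd rx by simp
    next
      case 2
      have "q \<in> set Q" using 2 by simp
      moreover have "q x = 1" using sat Q \<open>q \<in> set Q\<close> unfolding 2 by auto
      ultimately show ?thesis using lab 2 pmd rx by simp
    qed
  qed
  show ?thesis unfolding dt_def ndt_def using cov labs chain_wf[OF Q] chain_det by simp
qed


abbreviation "prob z \<equiv> is_problem (UNIV::nat set) F5 2 z"

lemma prob_iff: "prob (nu,fs) \<longleftrightarrow> fs \<noteq> [] \<and> set fs \<subseteq> F5 \<and>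
   (\<forall>d. length d = length fs \<and> set d \<subseteq> {..<2} \<longrightarrow> nu d \<noteq> {} \<and> finite (nu d))"
  by (simp add: is_problem_def)

lemma row_ok: "set fs \<subseteq> F5 \<Longrightarrow> set (map (\<lambda>f. f x) fs) \<subseteq> {..<2::nat}"
proof
  fix y assume "set fs \<subseteq> F5" "y \<in> set (map (\<lambda>f. f x) fs)"
  then obtain f where "f \<in> F5" "y = f x" by auto
  then show "y \<in> {..<2}" using F5_01[of f x] by auto
qed

lemma nu_ne: "prob (nu,fs) \<Longrightarrow> \<exists>m. m \<in> nu (map (\<lambda>f. f x) fs)"
proof -
  assume P: "prob (nu,fs)"
  then have h: "\<forall>d. length d = length fs \<and> set d \<subseteq> {..<2} \<longrightarrow> nu d \<noteq> {}" "set fs \<subseteq> F5"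
    unfolding prob_iff by blast+
  have "nu (map (\<lambda>f. f x) fs) \<noteq> {}" using h(1) row_ok[OF h(2), of x] by simp
  then show ?thesis by blast
qed

definition labf :: "(nat list \<Rightarrow> nat set) \<Rightarrow> (nat \<Rightarrow> nat) list \<Rightarrow> (nat \<Rightarrow> nat) \<Rightarrow> nat" where
  "labf nu fs q = (SOME m. \<forall>x. q x = 1 \<longrightarrow> m \<in> nu (map (\<lambda>f. f x) fs))"

lemma labf_ok:
  assumes "prob (nu,fs)" "q \<in> F5" "q x = 1"
  shows "labf nu fs q \<in> nu (map (\<lambda>f. f x) fs)"
proof -
  obtain i where qi: "q = f5 i" using assms(2) by (auto simp: F5_def)
  have xi: "\<And>y. q y = 1 \<Longrightarrow> y = i" by (auto simp: qi f5_def split: if_splits)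
  obtain m where m: "m \<in> nu (map (\<lambda>f. f i) fs)" using nu_ne[OF assms(1)] by blast
  have "\<exists>m. \<forall>y. q y = 1 \<longrightarrow> m \<in> nu (map (\<lambda>f. f y) fs)" using m xi by blast
  from someI_ex[OF this] show ?thesis unfolding labf_def using assms(3) by blast
qed

lemma exists_dt:
  assumes "prob (nu,fs)"
  shows "\<exists>G. dt UNIV 2 (nu,fs) G \<and> depth G \<le> length fs"
proof -
  have F: "set fs \<subseteq> F5" using assms prob_iff by blast
  obtain t where t: "t \<in> nu (map (\<lambda>f. f 0) fs)" using nu_ne[OF assms] by blast
  have "dt UNIV 2 (nu, fs) [chain (labf nu fs) fs t]"
  proof (rule chain_dt[OF F])
    show "\<And>q x. q \<in> set fs \<Longrightarrow> q x = 1 \<Longrightarrow> labf nu fs q \<in> nu (map (\<lambda>f. f x) fs)"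
      using labf_ok[OF assms] F by blast
    fix x assume "\<forall>q\<in>set fs. q x = 0"
    then have "map (\<lambda>f. f x) fs = map (\<lambda>f. f 0) fs" using F F5_zero by (metis (no_types, lifting) map_eq_conv subsetD)
    then show "t \<in> nu (map (\<lambda>f. f x) fs)" using t by metis
  qed simp
  then show ?thesis using chain_depth by blast
qed

lemma hd_le: "dt UNIV 2 z G \<Longrightarrow> hcomp UNIV 2 CD z \<le> depth G"
  unfolding hcomp_def cmeasure.case by (rule Least_le) blast

lemma ha_le: "ndt UNIV 2 z G \<Longrightarrow> hcomp UNIV 2 CA z \<le> depth G"
  unfolding hcomp_def cmeasure.case by (rule Least_le) blast

lemma hd_le_hi: "prob (nu,fs) \<Longrightarrow> hcomp UNIV 2 CD (nu,fs) \<le> length fs"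
proof -
  assume "prob (nu,fs)"
  then obtain G where "dt UNIV 2 (nu,fs) G" "depth G \<le> length fs" using exists_dt by blast
  then show ?thesis using hd_le[of "(nu,fs)" G] by simp
qed

lemma hd_ex: "prob (nu,fs) \<Longrightarrow> \<exists>G. dt UNIV 2 (nu,fs) G \<and> depth G = hcomp UNIV 2 CD (nu,fs)"
  unfolding hcomp_def cmeasure.case by (rule LeastI_ex) (use exists_dt in blast)

lemma ha_ex: "prob (nu,fs) \<Longrightarrow> \<exists>G. ndt UNIV 2 (nu,fs) G \<and> depth G = hcomp UNIV 2 CA (nu,fs)"
  unfolding hcomp_def cmeasure.case by (rule LeastI_ex) (use exists_dt dt_def in blast)

lemma ha_le_hd: "prob (nu,fs) \<Longrightarrow> hcomp UNIV 2 CA (nu,fs) \<le> hcomp UNIV 2 CD (nu,fs)"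
proof -
  assume "prob (nu,fs)"
  then obtain G where "dt UNIV 2 (nu,fs) G" "depth G = hcomp UNIV 2 CD (nu,fs)" using hd_ex by blast
  then show ?thesis using ha_le[of "(nu,fs)" G] unfolding dt_def by simp
qed

lemma hd_le_ha:
  assumes P: "prob (nu,fs)"
  shows "hcomp UNIV 2 CD (nu,fs) \<le> hcomp UNIV 2 CA (nu,fs)"
proof -
  have F: "set fs \<subseteq> F5" using assms prob_iff by blast
  obtain G where G: "ndt UNIV 2 (nu,fs) G" "depth G = hcomp UNIV 2 CA (nu,fs)" using ha_ex[OF P] by blast
  have "map (\<lambda>f. f 0) fs \<in> rows UNIV fs" by (auto simp: rows_def)
  then have "map (\<lambda>f. f 0) fs \<in> (\<Union>pm\<in>paths G. subrows UNIV fs (fst pm))"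
    using G(1) unfolding ndt_def by simp
  then obtain pm where pm: "pm \<in> paths G" "map (\<lambda>f. f 0) fs \<in> subrows UNIV fs (fst pm)"
    by blast
  obtain p t where pmd: "pm = (p,t)" by fastforce
  have sat0: "\<forall>(f,d) \<in> set p. f \<in> set fs \<longrightarrow> f 0 = d" using pm(2) unfolding pmd subrows_def by (simp add: row_sat_row)
  define Q where "Q = filter (\<lambda>f. f \<in> set fs) (map fst p)"
  have "dt UNIV 2 (nu, fs) [chain (labf nu fs) Q t]"
  proof (rule chain_dt[OF F])
    show QS: "set Q \<subseteq> set fs" unfolding Q_def by auto
    show "labf nu fs q \<in> nu (map (\<lambda>f. f x) fs)" if "q \<in> set Q" "q x = 1" for q x
    proof -
      have "q \<in> F5" using that(1) QS F by blast
      then show ?thesis using labf_ok[OF P] that(2) by blast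
    qed
    fix x assume x0: "\<forall>q\<in>set Q. q x = 0"
    have "row_sat fs (map (\<lambda>f. f x) fs) p" unfolding row_sat_row
    proof (intro ballI impI, clarify)
      fix f d assume fd: "(f,d) \<in> set p" "f \<in> set fs"
      have "f \<in> set (map fst p)" using fd(1) by (metis fst_conv image_eqI set_map)
      then have "f \<in> set Q" unfolding Q_def using fd(2) by simp
      then have "f x = 0" using x0 by blast
      moreover have "case (f,d) of (f,d) \<Rightarrow> f \<in> set fs \<longrightarrow> f 0 = d" using sat0 fd(1) by (rule bspec)
      then have "f 0 = d" using fd(2) by simp
      moreover have "f 0 = 0" using F fd(2) F5_zero by blast
      ultimately show "f x = d" by simp
    qed
    then have "map (\<lambda>f. f x) fs \<in> subrows UNIV fs (fst pm)" unfolding pmd subrows_iff by auto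
    moreover have "\<forall>pm\<in>paths G. \<forall>r\<in>subrows UNIV fs (fst pm). snd pm \<in> nu r"
      using G(1) unfolding ndt_def by simp
    ultimately have "snd pm \<in> nu (map (\<lambda>f. f x) fs)" using pm(1) by blast
    then show "t \<in> nu (map (\<lambda>f. f x) fs)" using pmd by simp
  qed
  moreover have "depth [chain (labf nu fs) Q t] \<le> depth G"
  proof -
    have "depth [chain (labf nu fs) Q t] \<le> length Q" by (rule chain_depth)
    also have "\<dots> \<le> length p" unfolding Q_def by (metis length_filter_le length_map)
    also have "\<dots> \<le> depth G" using depth_ge[OF pm(1)] pmd by simp
    finally show ?thesis .
  qed
  ultimately show ?thesis using G(2) hd_le[of "(nu,fs)"] by (metis order.trans)
qed


lemma hd_eq_ha: "prob (nu,fs) \<Longrightarrow> hcomp UNIV 2 CA (nu,fs) = hcomp UNIV 2 CD (nu,fs)"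
  using hd_le_ha ha_le_hd by (meson antisym)

definition fsn :: "nat \<Rightarrow> (nat \<Rightarrow> nat) list" where "fsn n = map f5 [1..<Suc n]"
definition nun :: "nat list \<Rightarrow> nat set" where "nun d = {if 1 \<in> set d then 1 else 0}"

lemma fsn_F5: "set (fsn n) \<subseteq> F5" by (auto simp: fsn_def F5_def)

lemma prob_n: "n \<ge> 1 \<Longrightarrow> prob (nun, fsn n)"
proof -
  assume "n \<ge> 1"
  then have "fsn n \<noteq> []" by (simp add: fsn_def)
  then show ?thesis unfolding prob_iff using fsn_F5[of n] by (simp add: nun_def)
qed

lemma length_fsn: "length (fsn n) = n" by (simp add: fsn_def)

lemma lower:
  assumes G: "ndt UNIV 2 (nun, fsn n) G"
  shows "n \<le> depth G"
proof -
  let ?fs = "fsn n"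
  have "map (\<lambda>f. f 0) ?fs \<in> rows UNIV ?fs" by (auto simp: rows_def)
  then have "map (\<lambda>f. f 0) ?fs \<in> (\<Union>pm\<in>paths G. subrows UNIV ?fs (fst pm))"
    using G unfolding ndt_def by simp
  then obtain pm where pm: "pm \<in> paths G" "map (\<lambda>f. f 0) ?fs \<in> subrows UNIV ?fs (fst pm)"
    by blast
  obtain p t where pmd: "pm = (p,t)" by fastforce
  have sat0: "\<forall>(f,d) \<in> set p. f \<in> set ?fs \<longrightarrow> f 0 = d" using pm(2) unfolding pmd subrows_def by (simp add: row_sat_row)
  have "n \<le> length p"
  proof (rule ccontr)
    assume "\<not> n \<le> length p"
    have inj: "inj_on f5 {1..n}"
    proof (rule inj_onI)
      fix i j assume "f5 i = f5 j"
      then have "f5 i i = f5 j i" by simp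
      then show "i = j" by (auto simp: f5_def split: if_splits)
    qed
    have "\<exists>i\<in>{1..n}. f5 i \<notin> set (map fst p)"
    proof (rule ccontr)
      assume "\<not> ?thesis"
      then have "f5 ` {1..n} \<subseteq> set (map fst p)" by auto
      then have "card (f5 ` {1..n}) \<le> card (set (map fst p))" by (simp add: card_mono)
      also have "\<dots> \<le> length p" by (metis card_length length_map)
      finally show False using \<open>\<not> n \<le> length p\<close> card_image[OF inj] by simp
    qed
    then obtain i where i: "i \<in> {1..n}" "f5 i \<notin> set (map fst p)" by blast
    have "row_sat ?fs (map (\<lambda>f. f i) ?fs) p" unfolding row_sat_row
    proof (intro ballI impI, clarify)
      fix f d assume fd: "(f,d) \<in> set p" "f \<in> set ?fs"
      then obtain j where j: "f = f5 j" "j \<noteq> 0" using fsn_F5 by (auto simp: F5_def)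
      have "f \<in> set (map fst p)" using fd(1) by (metis fst_conv image_eqI set_map)
      then have "f \<noteq> f5 i" using i(2) by metis
      then have "f i = 0" using j by (auto simp: f5_def)
      moreover have "f 0 = d" using sat0 fd by fastforce
      moreover have "f 0 = 0" using j by (simp add: f5_def)
      ultimately show "f i = d" by simp
    qed
    then have ri: "map (\<lambda>f. f i) ?fs \<in> subrows UNIV ?fs p" unfolding subrows_iff by auto
    have lab: "\<forall>pm\<in>paths G. \<forall>r\<in>subrows UNIV ?fs (fst pm). snd pm \<in> nun r"
      using G unfolding ndt_def by simp
    have labr: "snd pm \<in> nun r" if "r \<in> subrows UNIV ?fs (fst pm)" for r
      using lab pm(1) that by blast
    have t1: "t \<in> nun (map (\<lambda>f. f i) ?fs)" using labr[of "map (\<lambda>f. f i) ?fs"] ri pmd by simp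
    have t0: "t \<in> nun (map (\<lambda>f. f 0) ?fs)" using labr[OF pm(2)] pmd by simp
    have "i \<in> set [1..<Suc n]" using i(1) by auto
    then have "f5 i \<in> set ?fs" unfolding fsn_def set_map by (rule imageI)
    then have "f5 i i \<in> set (map (\<lambda>f. f i) ?fs)" by simp
    then have "1 \<in> set (map (\<lambda>f. f i) ?fs)" by (simp add: f5_def)
    then have "t = 1" using t1 by (simp add: nun_def)
    moreover have z: "\<forall>f\<in>set ?fs. f 0 = 0" using fsn_F5 F5_zero by blast
    then have "1 \<notin> set (map (\<lambda>f. f 0) ?fs)" by auto
    then have "t = 0" using t0 by (simp add: nun_def)
    ultimately show False by simp
  qed
  also have "length p \<le> depth G" using depth_ge[OF pm(1)] pmd by simp
  finally show ?thesis .
qed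

lemma zn_vals:
  assumes "n \<ge> 1"
  shows "hcomp UNIV 2 CI (nun, fsn n) = n" "hcomp UNIV 2 CD (nun, fsn n) = n" "hcomp UNIV 2 CA (nun, fsn n) = n"
proof -
  have P: "prob (nun, fsn n)" using prob_n[OF assms] .
  show "hcomp UNIV 2 CI (nun, fsn n) = n" by (simp add: hcomp_def length_fsn)
  have "hcomp UNIV 2 CD (nun, fsn n) \<le> n" using hd_le_hi[OF P] by (simp add: length_fsn)
  moreover have "n \<le> hcomp UNIV 2 CA (nun, fsn n)"
  proof -
    obtain G where "ndt UNIV 2 (nun, fsn n) G" "depth G = hcomp UNIV 2 CA (nun, fsn n)" using ha_ex[OF P] by blast
    then show ?thesis using lower[of n G] by simp
  qed
  ultimately show "hcomp UNIV 2 CD (nun, fsn n) = n" "hcomp UNIV 2 CA (nun, fsn n) = n"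
    using hd_eq_ha[OF P] by auto
qed

lemma zc_vals:
  assumes "m \<ge> 1"
  shows "prob (\<lambda>_. {0}, replicate m (f5 1))" "hcomp UNIV 2 CI (\<lambda>_. {0}, replicate m (f5 1)) = m"
    "hcomp UNIV 2 CD (\<lambda>_. {0}, replicate m (f5 1)) = 0" "hcomp UNIV 2 CA (\<lambda>_. {0}, replicate m (f5 1)) = 0"
proof -
  have F: "set (replicate m (f5 1)) \<subseteq> F5" by (auto simp: F5_def)
  show P: "prob (\<lambda>_. {0}, replicate m (f5 1))" unfolding prob_iff using F assms by auto
  show "hcomp UNIV 2 CI (\<lambda>_. {0}, replicate m (f5 1)) = m" by (simp add: hcomp_def)
  have "dt UNIV 2 (\<lambda>_. {0}, replicate m (f5 1)) [chain (\<lambda>_. 0) [] 0]"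
    by (rule chain_dt[OF F]) auto
  moreover have "depth [chain (\<lambda>_. 0::nat) [] 0] = 0" using chain_depth[of "\<lambda>_. 0::nat" "[]" 0] by simp
  ultimately have "hcomp UNIV 2 CD (\<lambda>_. {0}, replicate m (f5 1)) \<le> 0"
    using hd_le by (metis)
  then show "hcomp UNIV 2 CD (\<lambda>_. {0}, replicate m (f5 1)) = 0" by simp
  then show "hcomp UNIV 2 CA (\<lambda>_. {0}, replicate m (f5 1)) = 0" using hd_eq_ha[OF P] by simp
qed


lemma hb_le_hc:
  assumes "prob z" "\<not> (b = CI \<and> c \<noteq> CI)"
  shows "hcomp UNIV 2 b z \<le> hcomp UNIV 2 c z"
proof -
  obtain nu fs where z: "z = (nu,fs)" by fastforce
  have P: "prob (nu,fs)" using assms z by simp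
  have "hcomp UNIV 2 b (nu,fs) \<le> hcomp UNIV 2 c (nu,fs)"
  proof -
    have ci: "hcomp UNIV 2 CI (nu,fs) = length fs" by (simp add: hcomp_def)
    show ?thesis using hd_eq_ha[OF P] hd_le_hi[OF P] assms(2) ci
      by (cases b; cases c) simp_all
  qed
  then show ?thesis using z by simp
qed

lemma Ufun_n:
  assumes "\<not> (b = CI \<and> c \<noteq> CI)" "n \<ge> 1"
  shows "Ufun UNIV F5 2 b c n = Some n"
proof -
  define S where "S = {hcomp UNIV 2 b z | z. prob z \<and> hcomp UNIV 2 c z \<le> n}"
  have sub: "S \<subseteq> {..n}" unfolding S_def using hb_le_hc[OF _ assms(1)] by fastforce
  have hv: "\<And>x. hcomp UNIV 2 x (nun, fsn n) = n"
    subgoal for x using zn_vals[OF assms(2)] by (cases x) simp_all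
    done
  have "n = hcomp UNIV 2 b (nun,fsn n) \<and> prob (nun,fsn n) \<and> hcomp UNIV 2 c (nun,fsn n) \<le> n"
    using hv prob_n[OF assms(2)] by simp
  then have nS: "n \<in> S" unfolding S_def by blast
  have fin: "finite S" using sub finite_subset by blast
  have "Max S = n" using sub nS fin by (meson Max_eqI atMost_iff subsetD)
  then show ?thesis unfolding Ufun_def Let_def S_def[symmetric] using nS fin by auto
qed

lemma Ufun_none:
  assumes "c \<noteq> CI"
  shows "Ufun UNIV F5 2 CI c n = None"
proof -
  define S where "S = {hcomp UNIV 2 CI z | z. prob z \<and> hcomp UNIV 2 c z \<le> n}"
  have "{1..} \<subseteq> S"
  proof
    fix m :: nat assume "m \<in> {1..}"
    then have m: "m \<ge> 1" by simp
    have "hcomp UNIV 2 c (\<lambda>_. {0}, replicate m (f5 1)) = 0" using zc_vals[OF m] assms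
      by (cases c) simp_all
    then have "m = hcomp UNIV 2 CI (\<lambda>_. {0}, replicate m (f5 1)) \<and> prob (\<lambda>_. {0}, replicate m (f5 1))
       \<and> hcomp UNIV 2 c (\<lambda>_. {0}, replicate m (f5 1)) \<le> n" using zc_vals[OF m] by simp
    then show "m \<in> S" unfolding S_def by blast
  qed
  moreover have "infinite {1::nat..}" by (simp add: infinite_Ici)
  ultimately have "infinite S" using finite_subset by blast
  then show ?thesis unfolding Ufun_def Let_def S_def[symmetric] by auto
qed

lemma typ_gamma:
  assumes g: "\<forall>n\<ge>1. g n = Some n"
  shows "typ_of g = TGamma"
proof -
  have inf1: "infinite {1::nat..}" by (simp add: infinite_Ici)
  have D: "{1..} \<subseteq> Dom g" "{1..} \<subseteq> DomP g" "{1..} \<subseteq> DomM g"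
    using g by (auto simp: Dom_def DomP_def DomM_def)
  have iD: "infinite (Dom g)" "infinite (DomP g)" "infinite (DomM g)"
    using D inf1 finite_subset by blast+
  have nb: "\<not> bounded_above g"
  proof
    assume "bounded_above g"
    then obtain B where B: "\<forall>n \<in> Dom g. the (g n) \<le> B" by (auto simp: bounded_above_def)
    have "Suc B \<in> Dom g" using D by auto
    then show False using B g by fastforce
  qed
  have "is_typ g TGamma" using iD by (simp add: is_typ_def)
  moreover have "\<And>t. is_typ g t \<Longrightarrow> t = TGamma"
    subgoal for t using iD nb by (cases t) (auto simp: is_typ_def)
    done
  ultimately show ?thesis unfolding typ_of_def by (rule the_equality)
qed

lemma typ_eps:
  assumes g: "\<forall>n. g n = None"
  shows "typ_of g = TEps"
proof -
  have "Dom g = {}" "DomP g = {}" "DomM g = {}" using g by (auto simp: Dom_def DomP_def DomM_def)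
  then have "is_typ g TEps" "\<And>t. is_typ g t \<Longrightarrow> t = TEps"
    by (auto simp: is_typ_def split: ftype.splits)
  then show ?thesis unfolding typ_of_def by (rule the_equality)
qed

theorem lemma13:
  shows "typ_u (UNIV :: nat set) F5 2 = t5"
proof (intro ext)
  fix b c
  show "typ_u (UNIV :: nat set) F5 2 b c = t5 b c"
  proof (cases "b = CI \<and> c \<noteq> CI")
    case True
    then have "typ_u (UNIV :: nat set) F5 2 b c = TEps"
      unfolding typ_u_def using Ufun_none by (intro typ_eps) auto
    then show ?thesis using True by (cases c) (auto simp: t5_def)
  next
    case False
    then have "typ_u (UNIV :: nat set) F5 2 b c = TGamma"
      unfolding typ_u_def using Ufun_n by (intro typ_gamma) auto
    then show ?thesis using False by (cases b; cases c) (auto simp: t5_def)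
  qed
qed

end
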